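(* Let $I$ be an index set and $\prec$ a linear order on $I$. Suppose $\mathcal F$ and $\mathcal G$ are two $\prec$-ordered, reduced TDDs over $I$ with $\Phi(\mathcal F)=\Phi(\mathcal G)$. Then $\mathcal F$ and $\mathcal G$ are isomorphic.
   Context: Indices take values in $\{0,1\}$; a tensor over $I$ is a map $\{0,1\}^I\to\mathbb{C}$ (tensors over subsets of $I$ are regarded as tensors over $I$ not depending on the other indices). Each index $x$ is regarded as the tensor $x(c)=c$, and $\overline{x}(c):=1-c$; operations on tensors are pointwise. A TDD over $I$ is $\mathcal F=(V,E,index,value,low,high,w)$: a rooted directed acyclic graph with finite node set $V$ partitioned into non-terminal nodes $V_N$ and terminal nodes $V_T$, root $r_{\mathcal F}$; $index:V_N\to I$; $value:V_T\to\mathbb{C}$; $low,high:V_N\to V$; edges are the low-edges $(v,low(v))$ and high-edges $(v,high(v))$, $v\in V_N$, plus a unique source-less incoming edge $e_r$ of the root; $w$ gives each edge a complex weight and $w_{\mathcal F}:=w(e_r)$. Node tensors: $\Phi(v)=value(v)$ for terminal $v$; otherwise $\Phi(v)=w_0\overline{x_v}\Phi(low(v))+w_1x_v\Phi(high(v))$ with $x_v=index(v)$ and $w_0,w_1$ the low-/high-edge weights. The TDD represents $\Phi(\mathcal F):=w_{\mathcal F}\Phi(r_{\mathcal F})$. $\mathcal F$ is $\prec$-ordered if for every non-terminal node $v$, $index(v)\prec index(low(v))$ whenever $low(v)$ is non-terminal and $index(v)\prec index(high(v))$ whenever $high(v)$ is non-terminal. Normality (w.r.t. $\prec$): the pivot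 of a tensor $\phi$ is the lexicographically smallest (compare at the $\prec$-smallest differing index, $0<1$) $\vec a$ with $|\phi(\vec a)|=\max_{\vec b}|\phi(\vec b)|$; $\phi$ is normal if $\phi=0$ or $\phi$ equals $1$ at its pivot. A TDD is normal if $\Phi(v)$ is normal for every node $v$. A TDD is reduced if it is normal and (1) $\Phi(v)\neq0$ for every node $v$; (2) all edges of weight $0$ point to the unique terminal node, which has value $1$; (3) $\Phi(u)\neq\Phi(v)$ for any two distinct nodes $u\neq v$. Two TDDs are isomorphic if there is a graph isomorphism between them (including the root edges $e_r$) preserving node indices, edge weights and terminal values, and mapping low-edges to low-edges and high-edges to high-edges. *)

theory Defs
  imports Complex_Main
begin

text \<open>Indices range over a finite linearly ordered type 'i (the index set I with
  the order given by the linorder instance).  An assignment of values in {0,1}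
  to the indices is a function 'i \<Rightarrow> bool (True = 1).\<close>

type_synonym 'i assignment = "'i \<Rightarrow> bool"
type_synonym 'i tensor = "'i assignment \<Rightarrow> complex"

definition idx_tensor :: "'i \<Rightarrow> 'i tensor" where
  "idx_tensor x = (\<lambda>a. of_bool (a x))"

definition lex_less :: "('i::linorder) assignment \<Rightarrow> 'i assignment \<Rightarrow> bool" where
  "lex_less a b \<longleftrightarrow> (\<exists>i. a i \<noteq> b i \<and> (\<forall>j. j < i \<longrightarrow> a j = b j) \<and> \<not> a i \<and> b i)"

definition max_abs :: "('i::finite) tensor \<Rightarrow> real" where
  "max_abs \<phi> = Max (range (\<lambda>b. cmod (\<phi> b)))"

definition pivot :: "('i::{finite,linorder}) tensor \<Rightarrow> 'i assignment" where
  "pivot \<phi> = (THE a. cmod (\<phi> a) = max_abs \<phi> \<and>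
      (\<forall>b. cmod (\<phi> b) = max_abs \<phi> \<longrightarrow> b \<noteq> a \<longrightarrow> lex_less a b))"

definition normal_tensor :: "('i::{finite,linorder}) tensor \<Rightarrow> bool" where
  "normal_tensor \<phi> \<longleftrightarrow> \<phi> = (\<lambda>_. 0) \<or> \<phi> (pivot \<phi>) = 1"

text \<open>A TDD with node type 'v.  nodes = V, nterm = V_N (non-terminal nodes),
  terminal nodes are nodes - nterm.  Each non-terminal node v has exactly one
  low-edge (v, lo v) of weight wlo v and one high-edge (v, hi v) of weight whi v;
  wroot is the weight of the root edge e_r.\<close>
record ('i, 'v) tdd =
  nodes :: "'v set"
  nterm :: "'v set"
  root :: 'v
  idx :: "'v \<Rightarrow> 'i"
  val :: "'v \<Rightarrow> complex"
  lo :: "'v \<Rightarrow> 'v"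
  hi :: "'v \<Rightarrow> 'v"
  wlo :: "'v \<Rightarrow> complex"
  whi :: "'v \<Rightarrow> complex"
  wroot :: complex

definition term_nodes :: "('i, 'v) tdd \<Rightarrow> 'v set" where
  "term_nodes F = nodes F - nterm F"

definition tdd_edges :: "('i, 'v) tdd \<Rightarrow> ('v \<times> 'v) set" where
  "tdd_edges F = {(v, lo F v) | v. v \<in> nterm F} \<union> {(v, hi F v) | v. v \<in> nterm F}"

definition wf_tdd :: "('i, 'v) tdd \<Rightarrow> bool" where
  "wf_tdd F \<longleftrightarrow> finite (nodes F) \<and> nterm F \<subseteq> nodes F \<and> root F \<in> nodes F
     \<and> (\<forall>v\<in>nterm F. lo F v \<in> nodes F \<and> hi F v \<in> nodes F)
     \<and> acyclic (tdd_edges F)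
     \<and> (\<forall>v\<in>nodes F. (root F, v) \<in> (tdd_edges F)\<^sup>*)"

text \<open>Node tensors: the unique assignment of tensors to nodes satisfying the
  defining equations (unique because the graph is acyclic).\<close>
definition node_tensor :: "('i, 'v) tdd \<Rightarrow> 'v \<Rightarrow> 'i tensor" where
  "node_tensor F = (THE f.
     (\<forall>v\<in>nodes F. f v =
        (if v \<in> nterm F then
           (\<lambda>a. wlo F v * (1 - idx_tensor (idx F v) a) * f (lo F v) a
              + whi F v * idx_tensor (idx F v) a * f (hi F v) a)
         else (\<lambda>a. val F v)))
     \<and> (\<forall>v. v \<notin> nodes F \<longrightarrow> f v = (\<lambda>a. 0)))"

definition tdd_tensor :: "('i, 'v) tdd \<Rightarrow> 'i tensor" where
  "tdd_tensor F = (\<lambda>a. wroot F * node_tensor F (root F) a)"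

definition ordered_tdd :: "('i::linorder, 'v) tdd \<Rightarrow> bool" where
  "ordered_tdd F \<longleftrightarrow> (\<forall>v\<in>nterm F.
     (lo F v \<in> nterm F \<longrightarrow> idx F v < idx F (lo F v)) \<and>
     (hi F v \<in> nterm F \<longrightarrow> idx F v < idx F (hi F v)))"

definition normal_tdd :: "('i::{finite,linorder}, 'v) tdd \<Rightarrow> bool" where
  "normal_tdd F \<longleftrightarrow> (\<forall>v\<in>nodes F. normal_tensor (node_tensor F v))"

definition unique_one_terminal :: "('i, 'v) tdd \<Rightarrow> 'v \<Rightarrow> bool" where
  "unique_one_terminal F t \<longleftrightarrow> t \<in> term_nodes F \<and> term_nodes F = {t} \<and> val F t = 1"

definition reduced_tdd :: "('i::{finite,linorder}, 'v) tdd \<Rightarrow> bool" where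
  "reduced_tdd F \<longleftrightarrow> normal_tdd F
     \<and> (\<forall>v\<in>nodes F. node_tensor F v \<noteq> (\<lambda>_. 0))
     \<and> (wroot F = 0 \<longrightarrow> unique_one_terminal F (root F))
     \<and> (\<forall>v\<in>nterm F. (wlo F v = 0 \<longrightarrow> unique_one_terminal F (lo F v))
                   \<and> (whi F v = 0 \<longrightarrow> unique_one_terminal F (hi F v)))
     \<and> (\<forall>u\<in>nodes F. \<forall>v\<in>nodes F. u \<noteq> v \<longrightarrow> node_tensor F u \<noteq> node_tensor F v)"

text \<open>Isomorphism: a bijection of nodes (which induces a bijection of edges, since
  the edges are determined by their source and kind) preserving the root, the
  root-edge weight, non-terminality, indices, terminal values, edge weights and
  low/high successors.\<close>
definition tdd_iso :: "('i, 'v) tdd \<Rightarrow> ('i, 'w) tdd \<Rightarrow> bool" where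
  "tdd_iso F G \<longleftrightarrow> (\<exists>h. bij_betw h (nodes F) (nodes G)
     \<and> h (root F) = root G \<and> wroot F = wroot G
     \<and> (\<forall>v\<in>nodes F. v \<in> nterm F \<longleftrightarrow> h v \<in> nterm G)
     \<and> (\<forall>v\<in>term_nodes F. val G (h v) = val F v)
     \<and> (\<forall>v\<in>nterm F. idx G (h v) = idx F v
          \<and> h (lo F v) = lo G (h v) \<and> h (hi F v) = hi G (h v)
          \<and> wlo G (h v) = wlo F v \<and> whi G (h v) = whi F v))"

end

theory Submission
  imports Defs
begin

definition nt_spec :: "('i, 'v) tdd \<Rightarrow> ('v \<Rightarrow> 'i tensor) \<Rightarrow> bool" where
  "nt_spec F f \<longleftrightarrow>
     (\<forall>v\<in>nodes F. f v =
        (if v \<in> nterm F then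
           (\<lambda>a. wlo F v * (1 - idx_tensor (idx F v) a) * f (lo F v) a
              + whi F v * idx_tensor (idx F v) a * f (hi F v) a)
         else (\<lambda>a. val F v)))
     \<and> (\<forall>v. v \<notin> nodes F \<longrightarrow> f v = (\<lambda>a. 0))"

lemma node_tensor_alt: "node_tensor F = (THE f. nt_spec F f)"
  unfolding node_tensor_def nt_spec_def ..

lemma edges_finite: "wf_tdd F \<Longrightarrow> finite (tdd_edges F)"
proof -
  assume w: "wf_tdd F"
  have fin: "finite (nterm F)" using w unfolding wf_tdd_def by (meson finite_subset)
  have "tdd_edges F = (\<lambda>v. (v, lo F v)) ` nterm F \<union> (\<lambda>v. (v, hi F v)) ` nterm F"
    unfolding tdd_edges_def by blast
  then show ?thesis using fin by simp
qed

lemma wf_conv: "wf_tdd F \<Longrightarrow> wf ((tdd_edges F)\<inverse>)"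
  by (rule finite_acyclic_wf_converse) (auto simp: edges_finite wf_tdd_def)

lemma lo_edge: "v \<in> nterm F \<Longrightarrow> (lo F v, v) \<in> (tdd_edges F)\<inverse>"
  unfolding tdd_edges_def by blast
lemma hi_edge: "v \<in> nterm F \<Longrightarrow> (hi F v, v) \<in> (tdd_edges F)\<inverse>"
  unfolding tdd_edges_def by blast

lemma nt_spec_unique:
  assumes w: "wf_tdd F" and f: "nt_spec F f" and g: "nt_spec F g"
  shows "f = g"
proof
  fix v
  show "f v = g v"
  proof (induction v rule: wf_induct[OF wf_conv[OF w]])
    case (1 v)
    show ?case
    proof (cases "v \<in> nodes F")
      case True
      show ?thesis
      proof (cases "v \<in> nterm F")
        case True
        have "f (lo F v) = g (lo F v)" "f (hi F v) = g (hi F v)"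
          using 1 lo_edge[OF True] hi_edge[OF True] by auto
        then show ?thesis using f g \<open>v \<in> nodes F\<close> True unfolding nt_spec_def by simp
      next
        case False
        then show ?thesis using f g \<open>v \<in> nodes F\<close> unfolding nt_spec_def by simp
      qed
    next
      case False
      then show ?thesis using f g unfolding nt_spec_def by simp
    qed
  qed
qed

lemma nt_spec_exists:
  assumes w: "wf_tdd F"
  shows "\<exists>f. nt_spec F f"
proof -
  define R where "R = (tdd_edges F)\<inverse>"
  define H where "H = (\<lambda>f v. if v \<in> nodes F then (if v \<in> nterm F then
           (\<lambda>a. wlo F v * (1 - idx_tensor (idx F v) a) * f (lo F v) a
              + whi F v * idx_tensor (idx F v) a * f (hi F v) a)
         else (\<lambda>a. val F v)) else (\<lambda>a. 0))"
  have wR: "wf R" using wf_conv[OF w] R_def by simp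
  define f where "f = wfrec R H"
  have eq: "f v = H (cut f R v) v" for v
    unfolding f_def by (rule wfrec[OF wR])
  have "nt_spec F f"
    unfolding nt_spec_def
  proof (intro conjI ballI allI impI)
    fix v assume v: "v \<in> nodes F"
    show "f v = (if v \<in> nterm F then
           (\<lambda>a. wlo F v * (1 - idx_tensor (idx F v) a) * f (lo F v) a
              + whi F v * idx_tensor (idx F v) a * f (hi F v) a)
         else (\<lambda>a. val F v))"
    proof (cases "v \<in> nterm F")
      case True
      have "cut f R v (lo F v) = f (lo F v)"
        using cut_apply[of "lo F v" v R f] lo_edge[OF True] unfolding R_def by simp
      moreover have "cut f R v (hi F v) = f (hi F v)"
        using cut_apply[of "hi F v" v R f] hi_edge[OF True] unfolding R_def by simp
      ultimately show ?thesis using eq[of v] v True unfolding H_def by simp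
    next
      case False
      then show ?thesis using eq[of v] v unfolding H_def by simp
    qed
  next
    fix v assume "v \<notin> nodes F"
    then show "f v = (\<lambda>a. 0)" using eq[of v] unfolding H_def by simp
  qed
  then show ?thesis by blast
qed

lemma nt_spec_node_tensor: "wf_tdd F \<Longrightarrow> nt_spec F (node_tensor F)"
  unfolding node_tensor_alt
  by (metis nt_spec_exists nt_spec_unique theI)

lemma nterm_nodes0: "wf_tdd F \<Longrightarrow> v \<in> nterm F \<Longrightarrow> v \<in> nodes F"
  unfolding wf_tdd_def by blast

lemma nt_nterm:
  assumes w: "wf_tdd F" and v: "v \<in> nterm F"
  shows "node_tensor F v a =
     wlo F v * (1 - idx_tensor (idx F v) a) * node_tensor F (lo F v) a
              + whi F v * idx_tensor (idx F v) a * node_tensor F (hi F v) a"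
proof -
  have "\<forall>v\<in>nodes F. node_tensor F v =
        (if v \<in> nterm F then
           (\<lambda>a. wlo F v * (1 - idx_tensor (idx F v) a) * node_tensor F (lo F v) a
              + whi F v * idx_tensor (idx F v) a * node_tensor F (hi F v) a)
         else (\<lambda>a. val F v))"
    using nt_spec_node_tensor[OF w] unfolding nt_spec_def by blast
  from bspec[OF this nterm_nodes0[OF w v]] v show ?thesis by simp
qed

lemma nt_term:
  assumes w: "wf_tdd F" and vn: "v \<in> nodes F" and v: "v \<notin> nterm F"
  shows "node_tensor F v a = val F v"
proof -
  have "\<forall>v\<in>nodes F. node_tensor F v =
        (if v \<in> nterm F then
           (\<lambda>a. wlo F v * (1 - idx_tensor (idx F v) a) * node_tensor F (lo F v) a
              + whi F v * idx_tensor (idx F v) a * node_tensor F (hi F v) a)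
         else (\<lambda>a. val F v))"
    using nt_spec_node_tensor[OF w] unfolding nt_spec_def by blast
  from bspec[OF this vn] v show ?thesis by simp
qed

lemma nterm_nodes: "wf_tdd F \<Longrightarrow> v \<in> nterm F \<Longrightarrow> v \<in> nodes F"
  unfolding wf_tdd_def by blast
lemma lo_nodes: "wf_tdd F \<Longrightarrow> v \<in> nterm F \<Longrightarrow> lo F v \<in> nodes F"
  unfolding wf_tdd_def by blast
lemma hi_nodes: "wf_tdd F \<Longrightarrow> v \<in> nterm F \<Longrightarrow> hi F v \<in> nodes F"
  unfolding wf_tdd_def by blast

lemma locality_aux:
  fixes F :: "('i::linorder, 'v) tdd"
  assumes w: "wf_tdd F" and o: "ordered_tdd F"
  shows "v \<in> nodes F \<longrightarrow> (\<forall>(a::'i assignment) b. (\<forall>j. v \<in> nterm F \<longrightarrow> idx F v \<le> j \<longrightarrow> a j = b j) \<longrightarrow>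
     node_tensor F v a = node_tensor F v b)"
proof (induction v rule: wf_induct[OF wf_conv[OF w]])
  case (1 v)
  show ?case
  proof (intro impI allI)
    fix a b :: "'i assignment"
    assume vn: "v \<in> nodes F" and ab: "\<forall>j. v \<in> nterm F \<longrightarrow> idx F v \<le> j \<longrightarrow> a j = b j"
    show "node_tensor F v a = node_tensor F v b"
    proof (cases "v \<in> nterm F")
      case True
      have ax: "a (idx F v) = b (idx F v)" using ab True by auto
      have ihl: "lo F v \<in> nodes F \<longrightarrow> (\<forall>(a::'i assignment) b. (\<forall>j. lo F v \<in> nterm F \<longrightarrow> idx F (lo F v) \<le> j \<longrightarrow> a j = b j) \<longrightarrow>
         node_tensor F (lo F v) a = node_tensor F (lo F v) b)"
        by (rule mp[OF spec[OF 1, of "lo F v"] lo_edge[OF True]])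
      have ihh: "hi F v \<in> nodes F \<longrightarrow> (\<forall>(a::'i assignment) b. (\<forall>j. hi F v \<in> nterm F \<longrightarrow> idx F (hi F v) \<le> j \<longrightarrow> a j = b j) \<longrightarrow>
         node_tensor F (hi F v) a = node_tensor F (hi F v) b)"
        by (rule mp[OF spec[OF 1, of "hi F v"] hi_edge[OF True]])
      have "\<forall>j. lo F v \<in> nterm F \<longrightarrow> idx F (lo F v) \<le> j \<longrightarrow> a j = b j"
      proof (intro allI impI)
        fix j assume "lo F v \<in> nterm F" "idx F (lo F v) \<le> j"
        then have "idx F v \<le> j" using o True unfolding ordered_tdd_def by force
        then show "a j = b j" using ab True by auto
      qed
      then have lo: "node_tensor F (lo F v) a = node_tensor F (lo F v) b"
        using ihl lo_nodes[OF w True] by blast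
      have "\<forall>j. hi F v \<in> nterm F \<longrightarrow> idx F (hi F v) \<le> j \<longrightarrow> a j = b j"
      proof (intro allI impI)
        fix j assume "hi F v \<in> nterm F" "idx F (hi F v) \<le> j"
        then have "idx F v \<le> j" using o True unfolding ordered_tdd_def by force
        then show "a j = b j" using ab True by auto
      qed
      then have hi: "node_tensor F (hi F v) a = node_tensor F (hi F v) b"
        using ihh hi_nodes[OF w True] by blast
      show ?thesis using nt_nterm[OF w True, of a] nt_nterm[OF w True, of b] lo hi ax
        by (simp add: idx_tensor_def)
    next
      case False
      then show ?thesis using nt_term[OF w vn False] by simp
    qed
  qed
qed

lemma locality:
  assumes w: "wf_tdd F" and o: "ordered_tdd F"
  shows "v \<in> nodes F \<Longrightarrow> (\<forall>j. v \<in> nterm F \<longrightarrow> idx F v \<le> j \<longrightarrow> a j = b j) \<Longrightarrow>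
     node_tensor F v a = node_tensor F v b"
  using locality_aux[OF w o, of v] by blast

lemma child_indep:
  assumes w: "wf_tdd F" and o: "ordered_tdd F" and v: "v \<in> nterm F"
    and c: "c = lo F v \<or> c = hi F v"
  shows "node_tensor F c (a(idx F v := t)) = node_tensor F c a"
proof (rule locality[OF w o])
  show "c \<in> nodes F" using c lo_nodes[OF w v] hi_nodes[OF w v] by auto
  show "\<forall>j. c \<in> nterm F \<longrightarrow> idx F c \<le> j \<longrightarrow> (a(idx F v := t)) j = a j"
  proof (intro allI impI)
    fix j assume "c \<in> nterm F" "idx F c \<le> j"
    then have "idx F v < j" using o v c unfolding ordered_tdd_def by force
    then show "(a(idx F v := t)) j = a j" by auto
  qed
qed

lemma Phi_False:
  assumes w: "wf_tdd F" and o: "ordered_tdd F" and v: "v \<in> nterm F"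
  shows "node_tensor F v (a(idx F v := False)) = wlo F v * node_tensor F (lo F v) a"
  using nt_nterm[OF w v, of "a(idx F v := False)"] child_indep[OF w o v, of "lo F v" a False]
  by (simp add: idx_tensor_def)

lemma Phi_True:
  assumes w: "wf_tdd F" and o: "ordered_tdd F" and v: "v \<in> nterm F"
  shows "node_tensor F v (a(idx F v := True)) = whi F v * node_tensor F (hi F v) a"
  using nt_nterm[OF w v, of "a(idx F v := True)"] child_indep[OF w o v, of "hi F v" a True]
  by (simp add: idx_tensor_def)

lemma max_abs_scale:
  fixes \<phi> :: "('i::finite) tensor"
  shows "max_abs (\<lambda>a. c * \<phi> a) = cmod c * max_abs \<phi>"
proof -
  have "mono (\<lambda>x::real. cmod c * x)" by (simp add: mono_def mult_left_mono)
  then have "cmod c * Max (range (\<lambda>b. cmod (\<phi> b))) = Max ((\<lambda>x. cmod c * x) ` range (\<lambda>b. cmod (\<phi> b)))"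
    by (rule mono_Max_commute) auto
  also have "(\<lambda>x. cmod c * x) ` range (\<lambda>b. cmod (\<phi> b)) = range (\<lambda>b. cmod (c * \<phi> b))"
    by (auto simp: norm_mult)
  finally show ?thesis unfolding max_abs_def by simp
qed

lemma pivot_scale:
  fixes \<phi> :: "('i::{finite,linorder}) tensor"
  assumes c: "c \<noteq> 0"
  shows "pivot (\<lambda>a. c * \<phi> a) = pivot \<phi>"
proof -
  have "\<And>b. (cmod (c * \<phi> b) = max_abs (\<lambda>a. c * \<phi> a)) = (cmod (\<phi> b) = max_abs \<phi>)"
    using c by (simp add: max_abs_scale norm_mult)
  then show ?thesis unfolding pivot_def by simp
qed

lemma normal_match:
  fixes \<phi> \<psi> :: "('i::{finite,linorder}) tensor"
  assumes n1: "normal_tensor \<phi>" "\<phi> \<noteq> (\<lambda>_. 0)"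
    and n2: "normal_tensor \<psi>" "\<psi> \<noteq> (\<lambda>_. 0)"
    and eq: "\<And>a. c * \<phi> a = d * \<psi> a"
  shows "c = d \<and> (c \<noteq> 0 \<longrightarrow> \<phi> = \<psi>)"
proof (cases "c = 0")
  case True
  then have "\<And>a. d * \<psi> a = 0" using eq by simp
  moreover obtain a0 where "\<psi> a0 \<noteq> 0" using n2(2) by (meson ext)
  ultimately have "d = 0" by (metis mult_eq_0_iff)
  then show ?thesis using True by simp
next
  case False
  have d: "d \<noteq> 0"
  proof
    assume "d = 0"
    then have "\<And>a. c * \<phi> a = 0" using eq by simp
    moreover obtain a0 where "\<phi> a0 \<noteq> 0" using n1(2) by (meson ext)
    ultimately show False using False by (metis mult_eq_0_iff)
  qed
  have psi: "\<psi> = (\<lambda>a. (c / d) * \<phi> a)"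
  proof
    fix a
    have "d * \<psi> a = c * \<phi> a" using eq[of a] by simp
    then show "\<psi> a = (c / d) * \<phi> a" using d by (simp add: eq_divide_eq mult.commute)
  qed
  have cd: "c / d \<noteq> 0" using False d by simp
  have p: "pivot \<psi> = pivot \<phi>" using pivot_scale[OF cd, of \<phi>] psi by simp
  have "\<phi> (pivot \<phi>) = 1" using n1 unfolding normal_tensor_def by simp
  moreover have "\<psi> (pivot \<psi>) = 1" using n2 unfolding normal_tensor_def by simp
  ultimately have "c / d = 1" using p psi by simp
  then have "c = d" using d by simp
  moreover have "\<phi> = \<psi>" using psi d \<open>c = d\<close> by simp
  ultimately show ?thesis by simp
qed

lemma red_normal: "reduced_tdd F \<Longrightarrow> v \<in> nodes F \<Longrightarrow> normal_tensor (node_tensor F v)"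
  unfolding reduced_tdd_def normal_tdd_def by auto
lemma red_nonzero: "reduced_tdd F \<Longrightarrow> v \<in> nodes F \<Longrightarrow> node_tensor F v \<noteq> (\<lambda>_. 0)"
  unfolding reduced_tdd_def by auto
lemma red_distinct: "reduced_tdd F \<Longrightarrow> u \<in> nodes F \<Longrightarrow> v \<in> nodes F \<Longrightarrow>
    node_tensor F u = node_tensor F v \<Longrightarrow> u = v"
  unfolding reduced_tdd_def by auto

lemma uot_tensor: "wf_tdd F \<Longrightarrow> unique_one_terminal F t \<Longrightarrow> node_tensor F t = (\<lambda>_. 1)"
  using nt_term[of F t] unfolding unique_one_terminal_def term_nodes_def by auto

lemma dependence:
  assumes w: "wf_tdd F" and o: "ordered_tdd F" and r: "reduced_tdd F" and v: "v \<in> nterm F"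
  shows "\<exists>a. node_tensor F v (a(idx F v := False)) \<noteq> node_tensor F v (a(idx F v := True))"
proof (rule ccontr)
  assume "\<not> ?thesis"
  then have all: "\<forall>a. node_tensor F v (a(idx F v := False)) = node_tensor F v (a(idx F v := True))"
    by blast
  have eq: "wlo F v * node_tensor F (lo F v) a = whi F v * node_tensor F (hi F v) a" for a
    using Phi_False[OF w o v, of a] Phi_True[OF w o v, of a] spec[OF all, of a] by simp
  have m: "wlo F v = whi F v \<and> (wlo F v \<noteq> 0 \<longrightarrow> node_tensor F (lo F v) = node_tensor F (hi F v))"
    by (rule normal_match[OF red_normal[OF r lo_nodes[OF w v]] red_nonzero[OF r lo_nodes[OF w v]]
          red_normal[OF r hi_nodes[OF w v]] red_nonzero[OF r hi_nodes[OF w v]] eq])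
  have vn: "v \<in> nodes F" using nterm_nodes[OF w v] .
  show False
  proof (cases "wlo F v = 0")
    case True
    then have "node_tensor F v = (\<lambda>_. 0)" using m nt_nterm[OF w v] by auto
    then show False using red_nonzero[OF r vn] by simp
  next
    case False
    have same: "node_tensor F (lo F v) = node_tensor F (hi F v)" using m False by simp
    have "\<And>a. node_tensor F v a = wlo F v * node_tensor F (lo F v) a"
      using nt_nterm[OF w v] m same by (simp add: algebra_simps)
    then have "\<And>a. 1 * node_tensor F v a = wlo F v * node_tensor F (lo F v) a" by simp
    from normal_match[OF red_normal[OF r vn] red_nonzero[OF r vn]
          red_normal[OF r lo_nodes[OF w v]] red_nonzero[OF r lo_nodes[OF w v]] this]
    have "node_tensor F v = node_tensor F (lo F v)" by simp
    then have "v = lo F v" using red_distinct[OF r vn lo_nodes[OF w v]] by simp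
    moreover have "(v, lo F v) \<in> tdd_edges F" using v unfolding tdd_edges_def by blast
    moreover have "acyclic (tdd_edges F)" using w unfolding wf_tdd_def by simp
    ultimately show False unfolding acyclic_def by auto
  qed
qed

lemma red_lo0: "reduced_tdd F \<Longrightarrow> v \<in> nterm F \<Longrightarrow> wlo F v = 0 \<Longrightarrow> unique_one_terminal F (lo F v)"
  unfolding reduced_tdd_def by blast
lemma red_hi0: "reduced_tdd F \<Longrightarrow> v \<in> nterm F \<Longrightarrow> whi F v = 0 \<Longrightarrow> unique_one_terminal F (hi F v)"
  unfolding reduced_tdd_def by blast
lemma red_root0: "reduced_tdd F \<Longrightarrow> wroot F = 0 \<Longrightarrow> unique_one_terminal F (root F)"
  unfolding reduced_tdd_def by blast
lemma root_nodes: "wf_tdd F \<Longrightarrow> root F \<in> nodes F"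
  unfolding wf_tdd_def by blast

lemma same_kind:
  fixes F :: "('i::{finite,linorder}, 'v) tdd" and G :: "('i, 'w) tdd"
  assumes wF: "wf_tdd F" and wG: "wf_tdd G" and oF: "ordered_tdd F" and oG: "ordered_tdd G"
    and rF: "reduced_tdd F" and rG: "reduced_tdd G"
    and v: "v \<in> nterm F" and u: "u \<in> nodes G" and eq: "node_tensor F v = node_tensor G u"
  shows "u \<in> nterm G \<and> idx G u = idx F v"
proof -
  obtain a where a: "node_tensor F v (a(idx F v := False)) \<noteq> node_tensor F v (a(idx F v := True))"
    using dependence[OF wF oF rF v] by blast
  have uN: "u \<in> nterm G"
  proof (rule ccontr)
    assume "u \<notin> nterm G"
    then have "\<And>b. node_tensor G u b = val G u" using nt_term[OF wG u] by blast
    then show False using a eq by simp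
  qed
  have "\<not> idx F v < idx G u"
  proof
    assume lt: "idx F v < idx G u"
    have "node_tensor G u (a(idx F v := False)) = node_tensor G u (a(idx F v := True))"
      by (rule locality[OF wG oG u]) (use lt in auto)
    then show False using a eq by simp
  qed
  moreover have "\<not> idx G u < idx F v"
  proof
    assume lt: "idx G u < idx F v"
    obtain b where b: "node_tensor G u (b(idx G u := False)) \<noteq> node_tensor G u (b(idx G u := True))"
      using dependence[OF wG oG rG uN] by blast
    have "node_tensor F v (b(idx G u := False)) = node_tensor F v (b(idx G u := True))"
      by (rule locality[OF wF oF nterm_nodes[OF wF v]]) (use lt in auto)
    then show False using b eq by simp
  qed
  ultimately show ?thesis using uN by simp
qed

lemma children:
  fixes F :: "('i::{finite,linorder}, 'v) tdd" and G :: "('i, 'w) tdd"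
  assumes wF: "wf_tdd F" and wG: "wf_tdd G" and oF: "ordered_tdd F" and oG: "ordered_tdd G"
    and rF: "reduced_tdd F" and rG: "reduced_tdd G"
    and v: "v \<in> nterm F" and u: "u \<in> nterm G" and ix: "idx G u = idx F v"
    and eq: "node_tensor F v = node_tensor G u"
  shows "wlo G u = wlo F v \<and> node_tensor F (lo F v) = node_tensor G (lo G u)
       \<and> whi G u = whi F v \<and> node_tensor F (hi F v) = node_tensor G (hi G u)"
proof -
  have e0: "wlo F v * node_tensor F (lo F v) a = wlo G u * node_tensor G (lo G u) a" for a
    using Phi_False[OF wF oF v, of a] Phi_False[OF wG oG u, of a] eq ix by simp
  have e1: "whi F v * node_tensor F (hi F v) a = whi G u * node_tensor G (hi G u) a" for a
    using Phi_True[OF wF oF v, of a] Phi_True[OF wG oG u, of a] eq ix by simp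
  have m0: "wlo F v = wlo G u \<and> (wlo F v \<noteq> 0 \<longrightarrow> node_tensor F (lo F v) = node_tensor G (lo G u))"
    by (rule normal_match[OF red_normal[OF rF lo_nodes[OF wF v]] red_nonzero[OF rF lo_nodes[OF wF v]]
          red_normal[OF rG lo_nodes[OF wG u]] red_nonzero[OF rG lo_nodes[OF wG u]] e0])
  have m1: "whi F v = whi G u \<and> (whi F v \<noteq> 0 \<longrightarrow> node_tensor F (hi F v) = node_tensor G (hi G u))"
    by (rule normal_match[OF red_normal[OF rF hi_nodes[OF wF v]] red_nonzero[OF rF hi_nodes[OF wF v]]
          red_normal[OF rG hi_nodes[OF wG u]] red_nonzero[OF rG hi_nodes[OF wG u]] e1])
  have l: "node_tensor F (lo F v) = node_tensor G (lo G u)"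
  proof (cases "wlo F v = 0")
    case True
    then show ?thesis using m0 uot_tensor[OF wF red_lo0[OF rF v]] uot_tensor[OF wG red_lo0[OF rG u]] by simp
  next
    case False then show ?thesis using m0 by simp
  qed
  have h: "node_tensor F (hi F v) = node_tensor G (hi G u)"
  proof (cases "whi F v = 0")
    case True
    then show ?thesis using m1 uot_tensor[OF wF red_hi0[OF rF v]] uot_tensor[OF wG red_hi0[OF rG u]] by simp
  next
    case False then show ?thesis using m1 by simp
  qed
  show ?thesis using m0 m1 l h by simp
qed

lemma root_match:
  fixes F :: "('i::{finite,linorder}, 'v) tdd" and G :: "('i, 'w) tdd"
  assumes wF: "wf_tdd F" and wG: "wf_tdd G"
    and rF: "reduced_tdd F" and rG: "reduced_tdd G"
    and T: "tdd_tensor F = tdd_tensor G"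
  shows "wroot G = wroot F \<and> node_tensor F (root F) = node_tensor G (root G)"
proof -
  have e: "wroot F * node_tensor F (root F) a = wroot G * node_tensor G (root G) a" for a
    using fun_cong[OF T, of a] unfolding tdd_tensor_def by simp
  have m: "wroot F = wroot G \<and> (wroot F \<noteq> 0 \<longrightarrow> node_tensor F (root F) = node_tensor G (root G))"
    by (rule normal_match[OF red_normal[OF rF root_nodes[OF wF]] red_nonzero[OF rF root_nodes[OF wF]]
          red_normal[OF rG root_nodes[OF wG]] red_nonzero[OF rG root_nodes[OF wG]] e])
  show ?thesis
  proof (cases "wroot F = 0")
    case True
    then show ?thesis using m uot_tensor[OF wF red_root0[OF rF]] uot_tensor[OF wG red_root0[OF rG]] by simp
  next
    case False then show ?thesis using m by simp
  qed
qed

lemma corr: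
  fixes F :: "('i::{finite,linorder}, 'v) tdd" and G :: "('i, 'w) tdd"
  assumes wF: "wf_tdd F" and wG: "wf_tdd G" and oF: "ordered_tdd F" and oG: "ordered_tdd G"
    and rF: "reduced_tdd F" and rG: "reduced_tdd G"
    and T: "tdd_tensor F = tdd_tensor G" and v: "v \<in> nodes F"
  shows "\<exists>u\<in>nodes G. node_tensor G u = node_tensor F v"
proof -
  have reach: "(root F, v) \<in> (tdd_edges F)\<^sup>*" using wF v unfolding wf_tdd_def by blast
  from reach show ?thesis
  proof (induction rule: rtrancl_induct)
    case base
    then show ?case using root_match[OF wF wG rF rG T] root_nodes[OF wG] by metis
  next
    case (step y z)
    then obtain u where u: "u \<in> nodes G" "node_tensor G u = node_tensor F y" by blast
    have y: "y \<in> nterm F" and z: "z = lo F y \<or> z = hi F y"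
      using step(2) unfolding tdd_edges_def by blast+
    have k: "u \<in> nterm G \<and> idx G u = idx F y"
      using same_kind[OF wF wG oF oG rF rG y u(1)] u(2) by simp
    have c: "node_tensor F (lo F y) = node_tensor G (lo G u) \<and> node_tensor F (hi F y) = node_tensor G (hi G u)"
      using children[OF wF wG oF oG rF rG y] k u(2) by simp
    show ?case using z c lo_nodes[OF wG] hi_nodes[OF wG] k by metis
  qed
qed

theorem theorem3:
  fixes F :: "('i::{finite,linorder}, 'v) tdd" and G :: "('i, 'w) tdd"
  assumes "wf_tdd F" and "wf_tdd G"
    and "ordered_tdd F" and "ordered_tdd G"
    and "reduced_tdd F" and "reduced_tdd G"
    and "tdd_tensor F = tdd_tensor G"
  shows "tdd_iso F G"
proof -
  note wF = assms(1) and wG = assms(2) and oF = assms(3) and oG = assms(4)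
    and rF = assms(5) and rG = assms(6) and T = assms(7)
  define h where "h v = (SOME u. u \<in> nodes G \<and> node_tensor G u = node_tensor F v)" for v
  have hv: "h v \<in> nodes G \<and> node_tensor G (h v) = node_tensor F v" if "v \<in> nodes F" for v
  proof -
    have "\<exists>u. u \<in> nodes G \<and> node_tensor G u = node_tensor F v"
      using corr[OF wF wG oF oG rF rG T that] by blast
    then show ?thesis unfolding h_def by (rule someI_ex)
  qed
  have hu: "h v = u" if "v \<in> nodes F" "u \<in> nodes G" "node_tensor G u = node_tensor F v" for v u
    using hv[OF that(1)] that red_distinct[OF rG] by metis
  have inj: "inj_on h (nodes F)"
  proof (rule inj_onI)
    fix x y assume "x \<in> nodes F" "y \<in> nodes F" "h x = h y"
    then show "x = y" using hv red_distinct[OF rF] by metis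
  qed
  have img: "h ` nodes F = nodes G"
  proof
    show "h ` nodes F \<subseteq> nodes G" using hv by blast
    show "nodes G \<subseteq> h ` nodes F"
    proof
      fix u assume u: "u \<in> nodes G"
      obtain v where v: "v \<in> nodes F" "node_tensor F v = node_tensor G u"
        using corr[OF wG wF oG oF rG rF T[symmetric] u] by blast
      then show "u \<in> h ` nodes F" using hu[OF v(1) u] by force
    qed
  qed
  have bij: "bij_betw h (nodes F) (nodes G)" using inj img unfolding bij_betw_def by blast
  have rt: "h (root F) = root G"
    using hu[OF root_nodes[OF wF] root_nodes[OF wG]] root_match[OF wF wG rF rG T] by simp
  have wr: "wroot F = wroot G" using root_match[OF wF wG rF rG T] by simp
  have kind: "v \<in> nterm F \<longleftrightarrow> h v \<in> nterm G" if v: "v \<in> nodes F" for v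
  proof
    assume "v \<in> nterm F"
    then show "h v \<in> nterm G" using same_kind[OF wF wG oF oG rF rG _ conjunct1[OF hv[OF v]]] hv[OF v] by simp
  next
    assume "h v \<in> nterm G"
    then show "v \<in> nterm F" using same_kind[OF wG wF oG oF rG rF _ v] hv[OF v] by simp
  qed
  have vals: "val G (h v) = val F v" if v: "v \<in> term_nodes F" for v
  proof -
    have vn: "v \<in> nodes F" "v \<notin> nterm F" using v unfolding term_nodes_def by auto
    have "h v \<notin> nterm G" using kind[OF vn(1)] vn(2) by simp
    then have "node_tensor G (h v) undefined = val G (h v)" using nt_term[OF wG] hv[OF vn(1)] by blast
    moreover have "node_tensor F v undefined = val F v" using nt_term[OF wF vn] .
    ultimately show ?thesis using hv[OF vn(1)] by simp
  qed
  have nts: "idx G (h v) = idx F v \<and> h (lo F v) = lo G (h v) \<and> h (hi F v) = hi G (h v)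
          \<and> wlo G (h v) = wlo F v \<and> whi G (h v) = whi F v" if v: "v \<in> nterm F" for v
  proof -
    have vn: "v \<in> nodes F" using nterm_nodes[OF wF v] .
    have k: "h v \<in> nterm G \<and> idx G (h v) = idx F v"
      using same_kind[OF wF wG oF oG rF rG v conjunct1[OF hv[OF vn]]] hv[OF vn] by simp
    have c: "wlo G (h v) = wlo F v \<and> node_tensor F (lo F v) = node_tensor G (lo G (h v))
       \<and> whi G (h v) = whi F v \<and> node_tensor F (hi F v) = node_tensor G (hi G (h v))"
      using children[OF wF wG oF oG rF rG v] k hv[OF vn] by simp
    have "h (lo F v) = lo G (h v)"
      using hu[OF lo_nodes[OF wF v] lo_nodes[OF wG conjunct1[OF k]]] c by simp
    moreover have "h (hi F v) = hi G (h v)"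
      using hu[OF hi_nodes[OF wF v] hi_nodes[OF wG conjunct1[OF k]]] c by simp
    ultimately show ?thesis using k c by simp
  qed
  show ?thesis unfolding tdd_iso_def
    using bij rt wr kind vals nts by blast
qed

end
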